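(* Let $\mathbb{W}$ be a subgroup of the finite group $\mathbb{W}_2$ that contains the group $\mathbb{W}_2^{\mathfrak{A}}$, and let $G$ be a $\mathbb{W}$-invariant finite subgroup of $\mathbb{T}_2$. Then there exists $n\in\mathbb{N}$ such that one of the following three possibilities holds: \begin{enumerate} \item $G\cong\mu_n^3$; \item $n$ is even and $G\cong\mu_{n}^2\times\mu_{\frac{n}{2}}$; \item $n$ is even and $G\cong\mu_{n}\times\mu_{\frac{n}{2}}^2$. \end{enumerate} Here $\mu_k$ denotes the cyclic group of order $k$.
   Context: $\mathbb{T}_2=\mathbb{G}_m^3=\mathrm{Spec}\,\mathbb{C}[M_2]$ with $M_2=\mathbb{Z}^3$, and $\mathrm{GL}_3(\mathbb{Z})=\mathrm{GL}(M_2)$ acts on $\mathbb{T}_2$ by group automorphisms (a matrix $A$ acting via $\chi^m\mapsto\chi^{A(m)}$ on characters). $\mathbb{W}_2\subset\mathrm{GL}_3(\mathbb{Z})$ is the group generated by the permutation matrices and the diagonal sign matrices $\mathrm{diag}(-1,1,1)$, $\mathrm{diag}(1,-1,1)$, $\mathrm{diag}(1,1,-1)$; $\mathbb{W}_2\cong\mathfrak{S}_4\times\mu_2$. $\mathbb{W}_2^{\mathfrak{A}}$ is its unique subgroup isomorphic to $\mathfrak{A}_4$, generated by the permutation matrices of order $3$ together with $\mathrm{diag}(-1,-1,1)$ and $\mathrm{diag}(-1,1,-1)$. *)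

theory Defs
  imports "HOL-Analysis.Analysis" "HOL-Algebra.Elementary_Groups"
begin

text \<open>Integer 3x3 matrices are elements of int^3^3; the character lattice M_2 = Z^3
  is int^3 (column vectors). Points of the torus T_2 = G_m^3 are complex^3 with
  nonzero coordinates.\<close>

definition perm_mat :: "(3 \<Rightarrow> 3) \<Rightarrow> int^3^3" where
  "perm_mat \<sigma> = (\<chi> i j. if j = \<sigma> i then 1 else 0)"

definition diag3 :: "int \<Rightarrow> int \<Rightarrow> int \<Rightarrow> int^3^3" where
  "diag3 a b c = (\<chi> i j. if i = j then (if i = 1 then a else if i = 2 then b else c) else 0)"

definition W2_gens :: "(int^3^3) set" where
  "W2_gens = {perm_mat \<sigma> | \<sigma>. \<sigma> permutes (UNIV :: 3 set)}
     \<union> {diag3 (-1) 1 1, diag3 1 (-1) 1, diag3 1 1 (-1)}"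

definition W2A_gens :: "(int^3^3) set" where
  "W2A_gens = {perm_mat \<sigma> | \<sigma>. \<sigma> permutes (UNIV :: 3 set) \<and> \<sigma> \<noteq> id \<and> \<sigma> \<circ> \<sigma> \<circ> \<sigma> = id}
     \<union> {diag3 (-1) (-1) 1, diag3 (-1) 1 (-1)}"

inductive_set gen_group :: "(int^3^3) set \<Rightarrow> (int^3^3) set" for S where
  gen_one: "mat 1 \<in> gen_group S"
| gen_mult: "g \<in> S \<Longrightarrow> A \<in> gen_group S \<Longrightarrow> g ** A \<in> gen_group S"
| gen_inv: "g \<in> S \<Longrightarrow> invertible g \<Longrightarrow> A \<in> gen_group S \<Longrightarrow> matrix_inv g ** A \<in> gen_group S"

definition W2 :: "(int^3^3) set" where "W2 = gen_group W2_gens"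
definition W2A :: "(int^3^3) set" where "W2A = gen_group W2A_gens"

definition torus :: "(complex^3) monoid" where
  "torus = \<lparr>carrier = {t. \<forall>i. t $ i \<noteq> 0},
            monoid.mult = (\<lambda>s t. \<chi> i. s $ i * t $ i),
            one = (\<chi> i. 1)\<rparr>"

text \<open>Action of A in GL(M_2) on T_2 via chi^m |-> chi^(A m):
  the i-th coordinate of the image of t is chi^(A e_i)(t) = prod_j t_j^(A_ji).\<close>
definition act :: "int^3^3 \<Rightarrow> complex^3 \<Rightarrow> complex^3" where
  "act A t = (\<chi> i. \<Prod>j\<in>UNIV. (t $ j) powi (A $ j $ i))"

abbreviation mu :: "nat \<Rightarrow> int monoid" where "mu k \<equiv> integer_mod_group k"

end

theory Submission
  imports Defs
begin

definition Zp :: "nat \<Rightarrow> int \<Rightarrow> complex" where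
  "Zp n a = exp (2 * of_real pi * \<i> * of_int a / of_nat n)"

lemma Zp_add: "Zp n (a + b) = Zp n a * Zp n b"
  unfolding Zp_def by (simp add: add_divide_distrib distrib_left exp_add)

lemma Zp_0 [simp]: "Zp n 0 = 1"
  unfolding Zp_def by simp

lemma Zp_nz [simp]: "Zp n a \<noteq> 0"
  unfolding Zp_def by simp

lemma Zp_mult_n: assumes "n > 0" shows "Zp n (int n * k) = 1"
proof -
  have "2 * of_real pi * \<i> * of_int (int n * k) / of_nat n = (2 * of_int k * pi) * \<i>"
    using assms by (simp add: field_simps)
  moreover have "exp ((2 * of_int k * pi) * \<i>) = 1" by (rule exp_integer_2pi) simp
  ultimately show ?thesis unfolding Zp_def by simp
qed

lemma Zp_mod: assumes "n > 0" shows "Zp n (a mod int n) = Zp n a"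
proof -
  have "a = a mod int n + int n * (a div int n)" by simp
  then have "Zp n a = Zp n (a mod int n) * Zp n (int n * (a div int n))"
    by (metis Zp_add)
  then show ?thesis using Zp_mult_n[OF assms] by simp
qed

lemma Zp_nat: "Zp n (int j) = exp(2 * of_real pi * \<i> * of_nat j / of_nat n)"
  unfolding Zp_def by simp

lemma Zp_eq1: assumes "n > 0" shows "Zp n a = 1 \<longleftrightarrow> int n dvd a"
proof -
  obtain j where j: "a mod int n = int j" using assms
    by (metis pos_mod_sign of_nat_0_less_iff nonneg_int_cases)
  have "Zp n a = Zp n (int j)" using Zp_mod[OF assms, of a] j by simp
  also have "\<dots> = 1 \<longleftrightarrow> n dvd j" unfolding Zp_nat
    using complex_root_unity_eq_1[of n j] assms by simp
  also have "\<dots> \<longleftrightarrow> int n dvd a" using j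
    by (metis dvd_imp_mod_0 mod_0_imp_dvd of_nat_dvd_iff of_nat_0 mod_mod_trivial)
  finally show ?thesis .
qed

lemma Zp_eq_iff: assumes "n > 0" shows "Zp n a = Zp n b \<longleftrightarrow> int n dvd (a - b)"
proof -
  have "Zp n a = Zp n (a - b) * Zp n b" by (metis Zp_add diff_add_cancel)
  then have "Zp n a = Zp n b \<longleftrightarrow> Zp n (a - b) = 1" by auto
  then show ?thesis using Zp_eq1[OF assms] by simp
qed

lemma Zp_neg: "Zp n (- a) = inverse (Zp n a)"
  by (metis Zp_add Zp_0 add.left_inverse inverse_unique mult.commute)

lemma Zp_roots: assumes "n > 0" "z ^ n = 1" shows "\<exists>a. z = Zp n a"
proof -
  have "z \<in> {z::complex. z^n = 1}" using assms by simp
  then obtain j where "z = exp(2 * of_real pi * \<i> * of_nat j / of_nat n)"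
    using complex_roots_unity[of n] assms by auto
  then show ?thesis using Zp_nat by metis
qed

lemma Zp_pow: "Zp n a ^ k = Zp n (int k * a)"
  by (induction k) (simp_all add: Zp_add distrib_right)

lemma Zp_root: assumes "n > 0" shows "Zp n a ^ n = 1"
  using Zp_pow Zp_mult_n[OF assms] by simp

lemma fin_mult_pow:
  fixes P :: "complex set"
  assumes fin: "finite P" and nz: "0 \<notin> P" and cl: "\<forall>x\<in>P. \<forall>y\<in>P. x * y \<in> P" and x: "x \<in> P"
  shows "x ^ card P = 1"
proof -
  have xnz: "x \<noteq> 0" using x nz by auto
  have inj: "inj_on ((*) x) P" using xnz by (auto simp: inj_on_def)
  have img: "(*) x ` P = P"
    by (rule card_subset_eq[OF fin]) (use cl x inj fin in \<open>auto simp: card_image\<close>)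
  have "prod id P = prod id ((*) x ` P)" using img by simp
  also have "\<dots> = prod (\<lambda>y. x * y) P" using prod.reindex[OF inj] by simp
  also have "\<dots> = x ^ card P * prod id P" by (simp add: prod.distrib)
  finally have "prod id P = x ^ card P * prod id P" .
  moreover have "prod id P \<noteq> 0" using fin nz by simp
  ultimately show ?thesis by simp
qed


definition VV :: "nat \<Rightarrow> int \<Rightarrow> int \<Rightarrow> int \<Rightarrow> complex^3" where
  "VV n a b c = vector [Zp n a, Zp n b, Zp n c]"

lemma VV_comp [simp]: "VV n a b c $ 1 = Zp n a" "VV n a b c $ 2 = Zp n b" "VV n a b c $ 3 = Zp n c"
  unfolding VV_def by simp_all

lemma VV_eq_iff: "VV n a b c = VV n a' b' c' \<longleftrightarrow> Zp n a = Zp n a' \<and> Zp n b = Zp n b' \<and> Zp n c = Zp n c'"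
  by (auto simp: vec_eq_iff forall_3)

lemma VV_mul: "(\<chi> i. VV n a b c $ i * VV n a' b' c' $ i) = VV n (a+a') (b+b') (c+c')"
  by (auto simp: vec_eq_iff forall_3 Zp_add)

lemma Zp_2mod: assumes "int n = 2 * int m" "m > 0" shows "Zp n (2 * (u mod int m)) = Zp n (2 * u)"
proof -
  have "n > 0" using assms by simp
  have "(2 * (u mod int m)) mod (2 * int m) = (2 * u) mod (2 * int m)"
    by (simp add: mod_mult_mult1)
  then have "(2 * int m) dvd (2 * (u mod int m) - 2 * u)" by (simp only: mod_eq_dvd_iff)
  then have "int n dvd (2 * (u mod int m) - 2 * u)" using assms(1) by simp
  then show ?thesis using Zp_eq_iff[OF \<open>n > 0\<close>] by simp
qed

lemma eq_of_dvd_range: fixes x y N :: int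
  assumes "0 \<le> x" "x < N" "0 \<le> y" "y < N" "N dvd x - y" shows "x = y"
  by (metis assms mod_eq_dvd_iff mod_pos_pos_trivial)

lemma iso_helper:
  fixes H :: "'a monoid" and \<phi> :: "'a \<Rightarrow> complex^3"
  assumes grp: "group H"
   and into: "\<forall>x\<in>carrier H. \<phi> x \<in> G"
   and hom: "\<forall>x\<in>carrier H. \<forall>y\<in>carrier H. \<phi> (x \<otimes>\<^bsub>H\<^esub> y) = (\<chi> i. \<phi> x $ i * \<phi> y $ i)"
   and inj: "inj_on \<phi> (carrier H)" and onto: "\<forall>g\<in>G. \<exists>x\<in>carrier H. g = \<phi> x"
  shows "torus\<lparr>carrier := G\<rparr> \<cong> H"
proof -
  have "\<phi> \<in> iso H (torus\<lparr>carrier := G\<rparr>)"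
    unfolding iso_iff using into hom inj onto by (auto simp: hom_def torus_def)
  then show ?thesis by (rule group.iso_sym[OF grp is_isoI])
qed


lemma perm_S: "(\<lambda>i::3. i + 1) permutes UNIV"
  by (rule bij_imp_permutes) (auto simp: bij_def inj_def surj_def intro: exI[of _ "_ - 1"])

lemma prod_3': "prod f (UNIV::3 set) = f 1 * f 2 * f 3"
  unfolding UNIV_3 by (simp add: ac_simps)

lemma D_entries: "diag3 a b c $ i $ j = (if i = j then (if i = 1 then a else if i = 2 then b else c) else 0)"
  unfolding diag3_def by simp

lemma P_entries: "perm_mat s $ i $ j = (if j = s i then 1 else 0)"
  unfolding perm_mat_def by simp

lemma act_D: "act (diag3 (-1) (-1) 1) (vector [a,b,c]) = vector [inverse a, inverse b, c]"
  unfolding act_def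
  by (simp add: vec_eq_iff forall_3 prod_3' D_entries)

lemma act_S: "act (perm_mat (\<lambda>i. i + 1)) (vector [a,b,c]) = vector [c, a, b]"
  unfolding act_def
  by (simp add: vec_eq_iff forall_3 prod_3' P_entries)

lemma vec_repr: "(g::complex^3) = vector [g$1, g$2, g$3]"
  by (simp add: vec_eq_iff forall_3)

lemma gen_in: "g \<in> S \<Longrightarrow> g \<in> gen_group S"
  using gen_group.gen_mult[OF _ gen_group.gen_one, of g S] by simp

theorem lemma7p1:
  fixes W :: "(int^3^3) set" and G :: "(complex^3) set"
  assumes W_one: "mat 1 \<in> W"
    and W_mult: "\<forall>A\<in>W. \<forall>B\<in>W. A ** B \<in> W"
    and W_inv: "\<forall>A\<in>W. \<exists>B\<in>W. A ** B = mat 1"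
    and W_sub: "W \<subseteq> W2"
    and W_sup: "W2A \<subseteq> W"
    and G_sub: "subgroup G torus"
    and G_fin: "finite G"
    and G_inv: "\<forall>A\<in>W. \<forall>g\<in>G. act A g \<in> G"
  shows "\<exists>n::nat. n > 0 \<and>
           (torus\<lparr>carrier := G\<rparr> \<cong> mu n \<times>\<times> mu n \<times>\<times> mu n
            \<or> (even n \<and> torus\<lparr>carrier := G\<rparr> \<cong> mu n \<times>\<times> mu n \<times>\<times> mu (n div 2))
            \<or> (even n \<and> torus\<lparr>carrier := G\<rparr> \<cong> mu n \<times>\<times> mu (n div 2) \<times>\<times> mu (n div 2)))"
proof -
  have Gnz: "\<And>g i. g \<in> G \<Longrightarrow> g $ i \<noteq> 0" using subgroup.subset[OF G_sub] by (auto simp: torus_def)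
  have Gmul: "\<And>g h. g\<in>G \<Longrightarrow> h\<in>G \<Longrightarrow> (\<chi> i. g$i * h$i) \<in> G"
    using subgroup.m_closed[OF G_sub] by (simp add: torus_def)
  have G1: "(\<chi> i. 1) \<in> G" using subgroup.one_closed[OF G_sub] by (simp add: torus_def)
  define S where "S = perm_mat (\<lambda>i::3. i + 1)"
  define D where "D = diag3 (-1) (-1) 1"
  have "S \<in> W2A_gens" unfolding W2A_gens_def S_def using perm_S
    by (auto simp: fun_eq_iff intro!: exI[of _ "\<lambda>i::3. i + 1"])
  then have SW: "S \<in> W" using W_sup gen_in unfolding W2A_def by blast
  have "D \<in> W2A_gens" unfolding W2A_gens_def D_def by auto
  then have DW: "D \<in> W" using W_sup gen_in unfolding W2A_def by blast
  have GS: "\<And>g. g \<in> G \<Longrightarrow> vector [g$3, g$1, g$2] \<in> G"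
    using G_inv SW act_S unfolding S_def by (metis vec_repr)
  have GD: "\<And>g. g \<in> G \<Longrightarrow> vector [inverse (g$1), inverse (g$2), g$3] \<in> G"
    using G_inv DW act_D unfolding D_def by (metis vec_repr)
  define P where "P = (\<lambda>g. g $ 3) ` G"
  define n where "n = card P"
  have Pfin: "finite P" using G_fin P_def by simp
  have P1: "1 \<in> P" using G1 unfolding P_def by force
  have Pnz: "0 \<notin> P" using Gnz unfolding P_def by auto
  have Pcl: "\<forall>x\<in>P. \<forall>y\<in>P. x * y \<in> P"
  proof (intro ballI)
    fix x y assume "x \<in> P" "y \<in> P"
    then obtain g h where "g \<in> G" "h \<in> G" "x = g $ 3" "y = h $ 3" unfolding P_def by auto
    then show "x * y \<in> P" unfolding P_def using Gmul[of g h] by force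
  qed
  have npos: "n > 0" using Pfin P1 unfolding n_def by (simp add: card_gt_0_iff) blast
  have Proot: "\<And>x. x \<in> P \<Longrightarrow> x ^ n = 1" using fin_mult_pow[OF Pfin Pnz Pcl] n_def by simp
  have "P = {z. z ^ n = 1}"
    by (rule card_subset_eq) (use Proot card_roots_unity_eq[OF npos] npos n_def in \<open>auto intro: card_ge_0_finite\<close>)
  then have ZpP: "\<And>a. Zp n a \<in> P" using Zp_root[OF npos] by auto
  have coordP: "\<And>g i. g \<in> G \<Longrightarrow> g $ i \<in> P"
  proof -
    fix g and i :: 3 assume g: "g \<in> G"
    have "g $ 3 \<in> P" using g P_def by auto
    moreover have "g $ 2 \<in> P" using GS[OF g] P_def by force
    moreover have "g $ 1 \<in> P" using GS[OF GS[OF g]] P_def by force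
    ultimately show "g $ i \<in> P" by (metis exhaust_3)
  qed
  define E where "E = (\<lambda>a b c. VV n a b c \<in> G)"
  have G_repr: "\<And>g. g \<in> G \<Longrightarrow> \<exists>a b c. g = VV n a b c"
  proof -
    fix g assume g: "g \<in> G"
    obtain a where "g $ 1 = Zp n a" using Zp_roots[OF npos] Proot coordP[OF g] by metis
    moreover obtain b where "g $ 2 = Zp n b" using Zp_roots[OF npos] Proot coordP[OF g] by metis
    moreover obtain c where "g $ 3 = Zp n c" using Zp_roots[OF npos] Proot coordP[OF g] by metis
    ultimately have "g = VV n a b c" by (simp add: vec_eq_iff forall_3)
    then show "\<exists>a b c. g = VV n a b c" by blast
  qed
  have E_add: "\<And>a b c a' b' c'. E a b c \<Longrightarrow> E a' b' c' \<Longrightarrow> E (a+a') (b+b') (c+c')"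
    unfolding E_def using Gmul VV_mul by metis
  have E_rot: "E c a b" if "E a b c" for a b c
    using GS[of "VV n a b c"] that unfolding E_def by (simp add: VV_def)
  have E_D: "E (-a) (-b) c" if "E a b c" for a b c
    using GD[of "VV n a b c"] that unfolding E_def by (simp add: VV_def Zp_neg)
  have E_0: "E 0 0 0" unfolding E_def using G1
    by (metis (no_types, lifting) VV_comp Zp_0 vec_lambda_beta vec_repr)
  have E_cong: "E a' b' c'" if "E a b c" "int n dvd (a - a')" "int n dvd (b - b')" "int n dvd (c - c')" for a b c a' b' c'
  proof -
    have "VV n a b c = VV n a' b' c'" using that(2-4) by (simp add: VV_eq_iff Zp_eq_iff[OF npos])
    then show ?thesis using that(1) unfolding E_def by simp
  qed
  have E_surj: "\<And>c. \<exists>a b. E a b c"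
  proof -
    fix c
    obtain g where g: "g \<in> G" "g $ 3 = Zp n c" using ZpP[of c] P_def by auto
    then obtain a b c' where "g = VV n a b c'" using G_repr by blast
    then have "E a b c" using g unfolding E_def by (simp add: VV_def)
    then show "\<exists>a b. E a b c" by blast
  qed
  have E_2: "\<And>c. E 0 0 (2 * c)"
  proof -
    fix c obtain a b where "E a b c" using E_surj by blast
    from E_add[OF this E_D[OF this]] show "E 0 0 (2 * c)" by simp
  qed
  have E_2all: "\<And>a b c. E (2*a) (2*b) (2*c)"
  proof -
    fix a b c
    have "E (2*a) 0 0" using E_rot[OF E_2] .
    moreover have "E 0 (2*b) 0" using E_rot[OF E_rot[OF E_2]] .
    ultimately have "E (2*a) (2*b) 0" using E_add by fastforce
    from E_add[OF this E_2[of c]] show "E (2*a) (2*b) (2*c)" by simp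
  qed
  have E_par: "\<And>a b c a' b' c'. E a b c \<Longrightarrow> even (a' - a) \<Longrightarrow> even (b' - b) \<Longrightarrow> even (c' - c) \<Longrightarrow> E a' b' c'"
  proof -
    fix a b c a' b' c' :: int assume "E a b c" "even (a' - a)" "even (b' - b)" "even (c' - c)"
    then obtain x y z where "a' - a = 2*x" "b' - b = 2*y" "c' - c = 2*z" by (meson evenE)
    with E_add[OF \<open>E a b c\<close> E_2all[of x y z]] show "E a' b' c'"
      by (smt (verit))
  qed
  have VV_mod: "VV n (a mod int n) (b mod int n) (c mod int n) = VV n a b c" for a b c
    by (simp add: VV_eq_iff Zp_mod[OF npos])
  have rng: "x = y" if "x \<in> carrier (mu k)" "y \<in> carrier (mu k)" "int k dvd x - y" "k > 0" for x y k
    using that eq_of_dvd_range[of x "int k" y] by (simp add: carrier_integer_mod_group)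
  have modc: "a mod int k \<in> carrier (mu k)" if "k > 0" for a k
    using that by (simp add: carrier_integer_mod_group)
  show ?thesis
  proof (cases "\<forall>k. E 0 0 k")
    case True
    have Eall: "E a b c" for a b c
    proof -
      have "E a 0 0" using E_rot True by blast
      moreover have "E 0 b 0" using E_rot True by blast
      ultimately have "E a b 0" using E_add by fastforce
      from E_add[OF this True[rule_format, of c]] show ?thesis by simp
    qed
    have "torus\<lparr>carrier := G\<rparr> \<cong> mu n \<times>\<times> mu n \<times>\<times> mu n"
    proof (rule iso_helper[where \<phi> = "\<lambda>(x,y,z). VV n x y z"])
      show "group (mu n \<times>\<times> mu n \<times>\<times> mu n)" by (simp add: DirProd_group)
      show "\<forall>x\<in>carrier (mu n \<times>\<times> mu n \<times>\<times> mu n). (\<lambda>(x,y,z). VV n x y z) x \<in> G"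
        using Eall unfolding E_def by auto
      show "\<forall>x\<in>carrier (mu n \<times>\<times> mu n \<times>\<times> mu n). \<forall>y\<in>carrier (mu n \<times>\<times> mu n \<times>\<times> mu n).
          (\<lambda>(x,y,z). VV n x y z) (x \<otimes>\<^bsub>mu n \<times>\<times> mu n \<times>\<times> mu n\<^esub> y) =
          (\<chi> i. (\<lambda>(x,y,z). VV n x y z) x $ i * (\<lambda>(x,y,z). VV n x y z) y $ i)"
        by (auto simp: DirProd_def VV_mul VV_eq_iff Zp_mod[OF npos])
      show "inj_on (\<lambda>(x,y,z). VV n x y z) (carrier (mu n \<times>\<times> mu n \<times>\<times> mu n))"
        unfolding inj_on_def
      proof (clarsimp)
        fix a b c a' b' c'
        assume c: "a \<in> carrier (mu n)" "b \<in> carrier (mu n)" "c \<in> carrier (mu n)"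
          "a' \<in> carrier (mu n)" "b' \<in> carrier (mu n)" "c' \<in> carrier (mu n)"
          and e: "VV n a b c = VV n a' b' c'"
        then show "a = a' \<and> b = b' \<and> c = c'"
          using rng[OF _ _ _ npos] by (simp add: VV_eq_iff Zp_eq_iff[OF npos])
      qed
      show "\<forall>g\<in>G. \<exists>x\<in>carrier (mu n \<times>\<times> mu n \<times>\<times> mu n). g = (\<lambda>(x,y,z). VV n x y z) x"
      proof
        fix g assume "g \<in> G"
        then obtain a b c where "g = VV n a b c" using G_repr by blast
        then show "\<exists>x\<in>carrier (mu n \<times>\<times> mu n \<times>\<times> mu n). g = (\<lambda>(x,y,z). VV n x y z) x"
          using modc[OF npos] VV_mod by (intro bexI[of _ "(a mod int n, b mod int n, c mod int n)"]) auto
      qed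
    qed
    then show ?thesis using npos by blast
  next
    case False
    then obtain k where k: "\<not> E 0 0 k" by blast
    have nev: "even n"
    proof (rule ccontr)
      assume "odd n"
      then obtain t where t: "int n + 1 = 2 * t" by (metis even_add even_of_nat odd_one evenE)
      have "E 0 0 (2 * (k * t))" by (rule E_2)
      moreover have "int n dvd (2 * (k * t) - k)"
      proof -
        have "2 * (k * t) = k * (2 * t)" by simp
        also have "\<dots> = k * (int n + 1)" using t by simp
        finally have "2 * (k * t) - k = int n * k" by (simp add: algebra_simps)
        then show ?thesis by simp
      qed
      ultimately have "E 0 0 k" using E_cong by fastforce
      then show False using k by simp
    qed
    have kodd: "odd k" using k E_2 by (metis evenE)
    have E3: "\<not> E 0 0 j" if "odd j" for j
    proof
      assume "E 0 0 j"
      from E_par[OF this, of 0 0 k] have "E 0 0 k" using that kodd by simp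
      then show False using k by simp
    qed
    have n001: "\<not> E 0 0 1" using E3 by simp
    have n100: "\<not> E 1 0 0" using n001 E_rot by blast
    have n010: "\<not> E 0 1 0" using n001 E_rot by blast
    obtain m where nm: "n = 2 * m" using nev by blast
    have mpos: "m > 0" using npos nm by simp
    have nm': "int n = 2 * int m" using nm by simp
    note Z2 = Zp_2mod[OF nm' mpos]
    have evn: "n div 2 = m" using nm by simp
    show ?thesis
    proof (cases "E 1 1 0")
      case True
      have e011: "E 0 1 1" using E_rot[OF True] .
      have e101: "E 1 0 1" using E_rot[OF e011] .
      have charB: "E a b c \<longleftrightarrow> even (a + b + c)" for a b c
      proof
        assume e: "E a b c"
        show "even (a + b + c)"
        proof (rule ccontr)
          assume o: "odd (a + b + c)"
          consider "odd a" "even b" "even c" | "even a" "odd b" "even c" | "even a" "even b" "odd c"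
            | "odd a" "odd b" "odd c" using o by auto
          then show False
          proof cases
            case 1 then show False using E_par[OF e, of 1 0 0] n100 by simp
          next
            case 2 then show False using E_par[OF e, of 0 1 0] n010 by simp
          next
            case 3 then show False using E_par[OF e, of 0 0 1] n001 by simp
          next
            case 4 then show False using E_par[OF E_add[OF e True], of 0 0 1] n001 by simp
          qed
        qed
      next
        assume ev: "even (a + b + c)"
        consider "even a" "even b" "even c" | "odd a" "odd b" "even c" | "even a" "odd b" "odd c"
            | "odd a" "even b" "odd c" using ev by auto
        then show "E a b c"
        proof cases
          case 1 then show ?thesis using E_par[OF E_0, of a b c] by simp
        next
          case 2 then show ?thesis using E_par[OF True, of a b c] by simp
        next
          case 3 then show ?thesis using E_par[OF e011, of a b c] by simp
        next
          case 4 then show ?thesis using E_par[OF e101, of a b c] by simp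
        qed
      qed
      let ?H = "mu n \<times>\<times> mu n \<times>\<times> mu m"
      let ?f = "\<lambda>(x,y,z). VV n x (x + y) (y + 2 * z)"
      have "torus\<lparr>carrier := G\<rparr> \<cong> ?H"
      proof (rule iso_helper[where \<phi> = ?f])
        show "group ?H" by (simp add: DirProd_group)
        show "\<forall>x\<in>carrier ?H. ?f x \<in> G"
          using charB unfolding E_def by auto
        show "\<forall>x\<in>carrier ?H. \<forall>y\<in>carrier ?H. ?f (x \<otimes>\<^bsub>?H\<^esub> y) = (\<chi> i. ?f x $ i * ?f y $ i)"
          by (auto simp: DirProd_def VV_mul VV_eq_iff Zp_mod[OF npos] Z2 Zp_add distrib_left mult_ac)
        show "inj_on ?f (carrier ?H)"
          unfolding inj_on_def
        proof (clarsimp)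
          fix a b c a' b' c'
          assume c: "a \<in> carrier (mu n)" "b \<in> carrier (mu n)" "c \<in> carrier (mu m)"
            "a' \<in> carrier (mu n)" "b' \<in> carrier (mu n)" "c' \<in> carrier (mu m)"
            and e: "VV n a (a + b) (b + 2 * c) = VV n a' (a' + b') (b' + 2 * c')"
          have d: "int n dvd a - a'" "int n dvd (a + b) - (a' + b')" "int n dvd (b + 2 * c) - (b' + 2 * c')"
            using e by (simp_all add: VV_eq_iff Zp_eq_iff[OF npos])
          have aa: "a = a'" using rng[OF c(1) c(4) d(1) npos] .
          have bb: "b = b'" using rng[OF c(2) c(5) _ npos] d(2) aa by simp
          have "2 * int m dvd 2 * (c - c')" using d(3) bb nm' by (simp add: algebra_simps)
          then have "int m dvd c - c'" by (metis mult_dvd_mono dvd_mult_cancel_left zero_neq_numeral)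
          then have cc: "c = c'" using rng[OF c(3) c(6) _ mpos] by simp
          show "a = a' \<and> b = b' \<and> c = c'" using aa bb cc by simp
        qed
        show "\<forall>g\<in>G. \<exists>x\<in>carrier ?H. g = ?f x"
        proof
          fix g assume "g \<in> G"
          then obtain a b c where g: "g = VV n a b c" using G_repr by blast
          then have "E a b c" using \<open>g \<in> G\<close> E_def by simp
          then have ev: "even (a + b + c)" using charB by simp
          define x where "x = a mod int n"
          define y where "y = (b - a) mod int n"
          define z where "z = ((c - (b - a)) div 2) mod int m"
          have evw: "even (c - (b - a))" using ev by auto
          have "Zp n (y + 2 * z) = Zp n ((b - a) + 2 * ((c - (b - a)) div 2))"
            unfolding y_def z_def by (simp add: Zp_add Zp_mod[OF npos] Z2)
          also have "\<dots> = Zp n c" using evw by simp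
          finally have 3: "Zp n (y + 2 * z) = Zp n c" .
          have 1: "Zp n x = Zp n a" unfolding x_def by (simp add: Zp_mod[OF npos])
          have "Zp n (x + y) = Zp n (a + (b - a))" unfolding x_def y_def Zp_add by (simp add: Zp_mod[OF npos])
          then have 2: "Zp n (x + y) = Zp n b" by simp
          have fg: "g = ?f (x, y, z)" unfolding g using 1 2 3 by (simp add: VV_eq_iff)
          have xc: "(x, y, z) \<in> carrier ?H"
            using modc[OF npos] modc[OF mpos] unfolding x_def y_def z_def by simp
          show "\<exists>x\<in>carrier ?H. g = ?f x" using xc fg by (rule bexI[rotated])
        qed
      qed
      then show ?thesis using npos nev evn by blast
    next
      case False
      have n011: "\<not> E 0 1 1" using False E_rot by blast
      have n101: "\<not> E 1 0 1" using False E_rot by blast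
      have notmixed: "even (a - b) \<and> even (b - c)" if e: "E a b c" for a b c
      proof (rule ccontr)
        assume o: "\<not> (even (a - b) \<and> even (b - c))"
        consider "odd a" "even b" "even c" | "even a" "odd b" "even c" | "even a" "even b" "odd c"
          | "odd a" "odd b" "even c" | "even a" "odd b" "odd c" | "odd a" "even b" "odd c" using o by auto
        then show False
        proof cases
          case 1 then show False using E_par[OF e, of 1 0 0] n100 by simp
        next
          case 2 then show False using E_par[OF e, of 0 1 0] n010 by simp
        next
          case 3 then show False using E_par[OF e, of 0 0 1] n001 by simp
        next
          case 4 then show False using E_par[OF e, of 1 1 0] False by simp
        next
          case 5 then show False using E_par[OF e, of 0 1 1] n011 by simp
        next
          case 6 then show False using E_par[OF e, of 1 0 1] n101 by simp
        qed
      qed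
      obtain a0 b0 where "E a0 b0 1" using E_surj by blast
      moreover have "odd a0" "odd b0" using notmixed[OF calculation] by auto
      ultimately have e111: "E 1 1 1" using E_par[of a0 b0 1 1 1 1] by simp
      have charB: "E a b c \<longleftrightarrow> even (a - b) \<and> even (b - c)" for a b c
      proof
        assume "E a b c" then show "even (a - b) \<and> even (b - c)" by (rule notmixed)
      next
        assume ev: "even (a - b) \<and> even (b - c)"
        then consider "even a" "even b" "even c" | "odd a" "odd b" "odd c" by auto
        then show "E a b c"
        proof cases
          case 1 then show ?thesis using E_par[OF E_0, of a b c] by simp
        next
          case 2 then show ?thesis using E_par[OF e111, of a b c] by simp
        qed
      qed
      let ?H = "mu n \<times>\<times> mu m \<times>\<times> mu m"
      let ?f = "\<lambda>(x,y,z). VV n x (x + 2 * y) (x + 2 * z)"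
      have "torus\<lparr>carrier := G\<rparr> \<cong> ?H"
      proof (rule iso_helper[where \<phi> = ?f])
        show "group ?H" by (simp add: DirProd_group)
        show "\<forall>x\<in>carrier ?H. ?f x \<in> G"
          using charB unfolding E_def by auto
        show "\<forall>x\<in>carrier ?H. \<forall>y\<in>carrier ?H. ?f (x \<otimes>\<^bsub>?H\<^esub> y) = (\<chi> i. ?f x $ i * ?f y $ i)"
          by (auto simp: DirProd_def VV_mul VV_eq_iff Zp_mod[OF npos] Z2 Zp_add distrib_left mult_ac)
        show "inj_on ?f (carrier ?H)"
          unfolding inj_on_def
        proof (clarsimp)
          fix a b c a' b' c'
          assume c: "a \<in> carrier (mu n)" "b \<in> carrier (mu m)" "c \<in> carrier (mu m)"
            "a' \<in> carrier (mu n)" "b' \<in> carrier (mu m)" "c' \<in> carrier (mu m)"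
            and e: "VV n a (a + 2 * b) (a + 2 * c) = VV n a' (a' + 2 * b') (a' + 2 * c')"
          have d: "int n dvd a - a'" "int n dvd (a + 2 * b) - (a' + 2 * b')" "int n dvd (a + 2 * c) - (a' + 2 * c')"
            using e by (simp_all add: VV_eq_iff Zp_eq_iff[OF npos])
          have aa: "a = a'" using rng[OF c(1) c(4) d(1) npos] .
          have "2 * int m dvd 2 * (b - b')" using d(2) aa nm' by (simp add: algebra_simps)
          then have "int m dvd b - b'" by (metis mult_dvd_mono dvd_mult_cancel_left zero_neq_numeral)
          then have bb: "b = b'" using rng[OF c(2) c(5) _ mpos] by simp
          have "2 * int m dvd 2 * (c - c')" using d(3) aa nm' by (simp add: algebra_simps)
          then have "int m dvd c - c'" by (metis mult_dvd_mono dvd_mult_cancel_left zero_neq_numeral)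
          then have cc: "c = c'" using rng[OF c(3) c(6) _ mpos] by simp
          show "a = a' \<and> b = b' \<and> c = c'" using aa bb cc by simp
        qed
        show "\<forall>g\<in>G. \<exists>x\<in>carrier ?H. g = ?f x"
        proof
          fix g assume "g \<in> G"
          then obtain a b c where g: "g = VV n a b c" using G_repr by blast
          then have "E a b c" using \<open>g \<in> G\<close> E_def by simp
          then have ev: "even (a - b)" "even (b - c)" using charB by simp_all
          define x where "x = a mod int n"
          define y where "y = ((b - a) div 2) mod int m"
          define z where "z = ((c - a) div 2) mod int m"
          have evb: "even (b - a)" using ev by auto
          have evc: "even (c - a)" using ev by auto
          have 1: "Zp n x = Zp n a" unfolding x_def by (simp add: Zp_mod[OF npos])
          have "Zp n (x + 2 * y) = Zp n (a + 2 * ((b - a) div 2))"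
            unfolding x_def y_def Zp_add by (simp add: Zp_mod[OF npos] Z2)
          also have "\<dots> = Zp n b" using evb by simp
          finally have 2: "Zp n (x + 2 * y) = Zp n b" .
          have "Zp n (x + 2 * z) = Zp n (a + 2 * ((c - a) div 2))"
            unfolding x_def z_def Zp_add by (simp add: Zp_mod[OF npos] Z2)
          also have "\<dots> = Zp n c" using evc by simp
          finally have 3: "Zp n (x + 2 * z) = Zp n c" .
          have fg: "g = ?f (x, y, z)" unfolding g using 1 2 3 by (simp add: VV_eq_iff)
          have xc: "(x, y, z) \<in> carrier ?H"
            using modc[OF npos] modc[OF mpos] unfolding x_def y_def z_def by simp
          show "\<exists>x\<in>carrier ?H. g = ?f x" using xc fg by (rule bexI[rotated])
        qed
      qed
      then show ?thesis using npos nev evn by blast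
    qed
  qed
qed
end
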